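(* Let $f$ be a real function defined on $\mathbb{T}^\kappa=\{a,\dots,b-1\}$ and $g$ a real function defined on $\mathbb{T}=\{a,\dots,b\}$. Fix $0<\alpha\le 1$ and put $\mu=1-\alpha$. Then $$\sum_{t=a}^{b-1}f(t)\,({}_a\Delta_t^{\alpha}g)(t)=f(b-1)g(b)-f(a)g(a)+\sum_{t=a}^{b-2}({}_t\Delta_{\rho(b)}^{\alpha}f)(t)\,g(t+1)$$ $$\qquad+\frac{\mu}{\Gamma(\mu+1)}\,g(a)\Bigl(\sum_{t=a}^{b-1}(t+\mu-a)^{(\mu-1)}f(t)-\sum_{t=a+1}^{b-1}(t+\mu-a-1)^{(\mu-1)}f(t)\Bigr),$$ where ${}_t\Delta_{\rho(b)}^{\alpha}f$ denotes the right fractional difference with upper endpoint $\rho(b)=b-1$.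
   Context: Let $a\in\mathbb{R}$, $b=a+k$ with $k\in\mathbb{N}$, $k\ge2$, $\mathbb{T}=\{a,a+1,\dots,b\}$, $\sigma(t)=t+1$, $\rho(t)=t-1$, $\Delta g(t)=g(t+1)-g(t)$. For real $x,y$, $x^{(y)}:=\Gamma(x+1)/\Gamma(x+1-y)$ (division at a pole yields zero). For $c\in\mathbb{T}$, $g$ defined on $\{a,\dots,c\}$ and $\nu\ge0$, define on $\{a,\dots,c\}$: left fractional sum $({}_a\Delta_t^{-\nu}g)(t):=g(t)+\frac{\nu}{\Gamma(\nu+1)}\sum_{s=a}^{t-1}(t+\nu-\sigma(s))^{(\nu-1)}g(s)$; right fractional sum with endpoint $c$: $({}_t\Delta_c^{-\nu}g)(t):=g(t)+\frac{\nu}{\Gamma(\nu+1)}\sum_{s=t+1}^{c}(s+\nu-\sigma(t))^{(\nu-1)}g(s)$. For $0<\alpha\le1$ and $\mu=1-\alpha$, the left and right fractional differences of order $\alpha$ are, for $t\in\{a,\dots,c-1\}$, $({}_a\Delta_t^{\alpha}g)(t):=\Delta\bigl({}_a\Delta^{-\mu}g\bigr)(t)$ and $({}_t\Delta_c^{\alpha}g)(t):=-\Delta\bigl({}_t\Delta_c^{-\mu}g\bigr)(t)$, where $\Delta$ acts on the function $\tau\mapsto({}_a\Delta_\tau^{-\mu}g)(\tau)$, resp. $\tau\mapsto({}_\tau\Delta_c^{-\mu}g)(\tau)$. *)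

theory Defs
  imports "HOL-Analysis.Analysis"
begin

text \<open>Generalized falling factorial x^(y) = Gamma(x+1)/Gamma(x+1-y).
  In Isabelle Gamma is 0 at its poles and division by 0 yields 0, matching the
  convention that division at a pole yields zero.\<close>
definition ffact :: "real \<Rightarrow> real \<Rightarrow> real" where
  "ffact x y = Gamma (x + 1) / Gamma (x + 1 - y)"

text \<open>Points of T are encoded as t = a + n with n a natural number.
  Left fractional sum of order nu at t = a + n:
  g(t) + nu/Gamma(nu+1) * sum_{s=a}^{t-1} (t + nu - sigma(s))^(nu-1) g(s),
  with s = a + i, so t + nu - sigma(s) = n + nu - i - 1.\<close>
definition left_fsum :: "real \<Rightarrow> real \<Rightarrow> (real \<Rightarrow> real) \<Rightarrow> nat \<Rightarrow> real" where
  "left_fsum nu a g n = g (a + real n) + nu / Gamma (nu + 1) *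
     (\<Sum>i<n. ffact (real n + nu - real i - 1) (nu - 1) * g (a + real i))"

text \<open>Right fractional sum of order nu with endpoint c = a + m at t = a + n:
  g(t) + nu/Gamma(nu+1) * sum_{s=t+1}^{c} (s + nu - sigma(t))^(nu-1) g(s),
  with s = a + j.\<close>
definition right_fsum :: "real \<Rightarrow> real \<Rightarrow> nat \<Rightarrow> (real \<Rightarrow> real) \<Rightarrow> nat \<Rightarrow> real" where
  "right_fsum nu a m g n = g (a + real n) + nu / Gamma (nu + 1) *
     (\<Sum>j\<in>{n+1..m}. ffact (real j + nu - real n - 1) (nu - 1) * g (a + real j))"

definition left_fdiff :: "real \<Rightarrow> real \<Rightarrow> (real \<Rightarrow> real) \<Rightarrow> nat \<Rightarrow> real" where
  "left_fdiff alpha a g n = left_fsum (1 - alpha) a g (Suc n) - left_fsum (1 - alpha) a g n"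

definition right_fdiff :: "real \<Rightarrow> real \<Rightarrow> nat \<Rightarrow> (real \<Rightarrow> real) \<Rightarrow> nat \<Rightarrow> real" where
  "right_fdiff alpha a m g n =
     - (right_fsum (1 - alpha) a m g (Suc n) - right_fsum (1 - alpha) a m g n)"

end

theory Submission imports Defs begin

lemma sbp: fixes F G :: "nat \<Rightarrow> real" shows
 "(\<Sum>i<Suc m. F i * (G (Suc i) - G i)) = F m * G (Suc m) - F 0 * G 0 + (\<Sum>i<m. - (F (Suc i) - F i) * G (Suc i))"
  by (induction m) (auto simp: algebra_simps)

lemma restr1: fixes h :: "nat \<Rightarrow> real" assumes "i \<le> m"
  shows "(\<Sum>j<Suc i. h j) = (\<Sum>j<Suc m. if j \<le> i then h j else 0)"
proof -
  have "(\<Sum>j<Suc m. if j \<le> i then h j else 0) = (\<Sum>j\<in>{..<Suc m} \<inter> {j. j \<le> i}. h j)"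
    by (simp add: sum.inter_restrict)
  also have "{..<Suc m} \<inter> {j. j \<le> i} = {..<Suc i}" using assms by auto
  finally show ?thesis by simp
qed

lemma restr2: fixes h :: "nat \<Rightarrow> real" assumes "i \<le> m"
  shows "(\<Sum>j<i. h j) = (\<Sum>j<Suc m. if j < i then h j else 0)"
proof -
  have "(\<Sum>j<Suc m. if j < i then h j else 0) = (\<Sum>j\<in>{..<Suc m} \<inter> {j. j < i}. h j)"
    by (simp add: sum.inter_restrict)
  also have "{..<Suc m} \<inter> {j. j < i} = {..<i}" using assms by auto
  finally show ?thesis by simp
qed

lemma restr3: fixes h :: "nat \<Rightarrow> real"
  shows "(\<Sum>j\<in>{p..m}. h j) = (\<Sum>j<Suc m. if p \<le> j then h j else 0)"
proof -
  have "(\<Sum>j<Suc m. if p \<le> j then h j else 0) = (\<Sum>j\<in>{..<Suc m} \<inter> {j. p \<le> j}. h j)"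
    by (simp add: sum.inter_restrict)
  also have "{..<Suc m} \<inter> {j. p \<le> j} = {p..m}" by auto
  finally show ?thesis by simp
qed

lemma kern: fixes F G K :: "nat \<Rightarrow> real" shows
 "(\<Sum>i<Suc m. F i * ((\<Sum>j<Suc i. K (Suc i - j) * G j) - (\<Sum>j<i. K (i - j) * G j))) =
  (\<Sum>p<Suc m. G p * ((\<Sum>j\<in>{p..m}. K (Suc j - p) * F j) - (\<Sum>j\<in>{Suc p..m}. K (j - p) * F j)))"
proof -
  have "(\<Sum>i<Suc m. F i * ((\<Sum>j<Suc i. K (Suc i - j) * G j) - (\<Sum>j<i. K (i - j) * G j)))
    = (\<Sum>i<Suc m. \<Sum>j<Suc m. F i * G j * ((if j \<le> i then K (Suc i - j) else 0) - (if j < i then K (i - j) else 0)))"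
  proof (rule sum.cong[OF refl])
    fix i assume "i \<in> {..<Suc m}"
    hence im: "i \<le> m" by simp
    show "F i * ((\<Sum>j<Suc i. K (Suc i - j) * G j) - (\<Sum>j<i. K (i - j) * G j)) =
      (\<Sum>j<Suc m. F i * G j * ((if j \<le> i then K (Suc i - j) else 0) - (if j < i then K (i - j) else 0)))"
      unfolding restr1[OF im] restr2[OF im] sum_subtractf[symmetric] sum_distrib_left
      by (rule sum.cong[OF refl]) (auto simp: algebra_simps)
  qed
  also have "\<dots> = (\<Sum>j<Suc m. \<Sum>i<Suc m. F i * G j * ((if j \<le> i then K (Suc i - j) else 0) - (if j < i then K (i - j) else 0)))"
    by (rule sum.swap)
  also have "\<dots> = (\<Sum>p<Suc m. G p * ((\<Sum>j\<in>{p..m}. K (Suc j - p) * F j) - (\<Sum>j\<in>{Suc p..m}. K (j - p) * F j)))"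
  proof (rule sum.cong[OF refl])
    fix p
    show "(\<Sum>i<Suc m. F i * G p * ((if p \<le> i then K (Suc i - p) else 0) - (if p < i then K (i - p) else 0))) =
      G p * ((\<Sum>j\<in>{p..m}. K (Suc j - p) * F j) - (\<Sum>j\<in>{Suc p..m}. K (j - p) * F j))"
      unfolding restr3[of _ p] restr3[of _ "Suc p"] sum_subtractf[symmetric] sum_distrib_left
      by (rule sum.cong[OF refl]) (auto simp: algebra_simps Suc_le_eq)
  qed
  finally show ?thesis .
qed

theorem theorem3:
  fixes a alpha :: real and k :: nat and f g :: "real \<Rightarrow> real"
  assumes "k \<ge> 2" and "0 < alpha" and "alpha \<le> 1"
  shows "(\<Sum>i<k. f (a + real i) * left_fdiff alpha a g i) =
      f (a + real k - 1) * g (a + real k) - f a * g a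
      + (\<Sum>i<k - 1. right_fdiff alpha a (k - 1) f i * g (a + real i + 1))
      + (1 - alpha) / Gamma ((1 - alpha) + 1) * g a *
        ((\<Sum>i<k. ffact (real i + (1 - alpha)) ((1 - alpha) - 1) * f (a + real i))
         - (\<Sum>i\<in>{1..<k}. ffact (real i + (1 - alpha) - 1) ((1 - alpha) - 1) * f (a + real i)))"
proof -
  define m where "m = k - 1"
  have k: "k = Suc m" using assms(1) unfolding m_def by simp
  define mu where "mu = 1 - alpha"
  define c where "c = mu / Gamma (mu + 1)"
  define K where "K d = ffact (real d + mu - 1) (mu - 1)" for d :: nat
  define F where "F i = f (a + real i)" for i :: nat
  define G where "G i = g (a + real i)" for i :: nat
  have L: "left_fsum mu a g n = G n + c * (\<Sum>j<n. K (n - j) * G j)" for n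
    unfolding left_fsum_def G_def c_def K_def
    by (simp add: of_nat_diff algebra_simps)
  have R: "right_fsum mu a m f n = F n + c * (\<Sum>j\<in>{Suc n..m}. K (j - n) * F j)" for n
  proof -
    have "(\<Sum>j\<in>{n+1..m}. ffact (real j + mu - real n - 1) (mu - 1) * f (a + real j))
        = (\<Sum>j\<in>{Suc n..m}. K (j - n) * F j)"
      by (rule sum.cong) (auto simp: K_def F_def of_nat_diff algebra_simps)
    thus ?thesis unfolding right_fsum_def c_def F_def by simp
  qed
  have LD: "left_fdiff alpha a g i = (G (Suc i) - G i) + c * ((\<Sum>j<Suc i. K (Suc i - j) * G j) - (\<Sum>j<i. K (i - j) * G j))" for i
    unfolding left_fdiff_def mu_def[symmetric] L by (simp add: algebra_simps)
  have RD: "right_fdiff alpha a m f i = - (F (Suc i) - F i) + c * ((\<Sum>j\<in>{Suc i..m}. K (j - i) * F j) - (\<Sum>j\<in>{Suc (Suc i)..m}. K (j - Suc i) * F j))" for i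
    unfolding right_fdiff_def mu_def[symmetric] R by (simp add: algebra_simps)
  have K1: "ffact (real i + mu) (mu - 1) = K (Suc i)" for i unfolding K_def by (simp add: algebra_simps)
  have K2: "ffact (real i + mu - 1) (mu - 1) = K i" for i unfolding K_def by simp
  have e1: "f (a + real k - 1) = F m" unfolding F_def k by (simp add: algebra_simps)
  have e2: "g (a + real k) = G (Suc m)" unfolding G_def k by simp
  have e3: "g (a + real i + 1) = G (Suc i)" for i unfolding G_def by (simp add: algebra_simps)
  have e4: "f a = F 0" "g a = G 0" unfolding F_def G_def by simp_all
  have KR: "(\<Sum>p<Suc m. G p * ((\<Sum>j\<in>{p..m}. K (Suc j - p) * F j) - (\<Sum>j\<in>{Suc p..m}. K (j - p) * F j)))
     = G 0 * ((\<Sum>j<Suc m. K (Suc j) * F j) - (\<Sum>j\<in>{1..<Suc m}. K j * F j))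
       + (\<Sum>i<m. G (Suc i) * ((\<Sum>j\<in>{Suc i..m}. K (j - i) * F j) - (\<Sum>j\<in>{Suc (Suc i)..m}. K (j - Suc i) * F j)))"
  proof -
    have a1: "{0..m} = {..<Suc m}" "{Suc 0..m} = {1..<Suc m}" by auto
    show ?thesis apply (subst sum.lessThan_Suc_shift) by (simp add: a1)
  qed
  have "(\<Sum>i<k. f (a + real i) * left_fdiff alpha a g i)
      = (\<Sum>i<Suc m. F i * (G (Suc i) - G i)) + c * (\<Sum>i<Suc m. F i * ((\<Sum>j<Suc i. K (Suc i - j) * G j) - (\<Sum>j<i. K (i - j) * G j)))"
    unfolding k LD F_def[symmetric] sum_distrib_left sum.distrib[symmetric]
    by (rule sum.cong[OF refl]) (simp add: algebra_simps)
  also have "\<dots> = F m * G (Suc m) - F 0 * G 0 + (\<Sum>i<m. - (F (Suc i) - F i) * G (Suc i))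
      + c * (G 0 * ((\<Sum>j<Suc m. K (Suc j) * F j) - (\<Sum>j\<in>{1..<Suc m}. K j * F j))
       + (\<Sum>i<m. G (Suc i) * ((\<Sum>j\<in>{Suc i..m}. K (j - i) * F j) - (\<Sum>j\<in>{Suc (Suc i)..m}. K (j - Suc i) * F j))))"
    unfolding sbp kern KR ..
  also have "\<dots> = F m * G (Suc m) - F 0 * G 0 + (\<Sum>i<m. right_fdiff alpha a m f i * G (Suc i))
      + c * G 0 * ((\<Sum>j<Suc m. K (Suc j) * F j) - (\<Sum>j\<in>{1..<Suc m}. K j * F j))"
  proof -
    have "(\<Sum>i<m. right_fdiff alpha a m f i * G (Suc i)) = (\<Sum>i<m. - (F (Suc i) - F i) * G (Suc i))
       + c * (\<Sum>i<m. G (Suc i) * ((\<Sum>j\<in>{Suc i..m}. K (j - i) * F j) - (\<Sum>j\<in>{Suc (Suc i)..m}. K (j - Suc i) * F j)))"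
      unfolding RD sum_distrib_left sum.distrib[symmetric]
      by (rule sum.cong[OF refl]) (simp add: algebra_simps)
    thus ?thesis by (simp add: algebra_simps)
  qed
  also have "\<dots> = f (a + real k - 1) * g (a + real k) - f a * g a
      + (\<Sum>i<k - 1. right_fdiff alpha a (k - 1) f i * g (a + real i + 1))
      + (1 - alpha) / Gamma ((1 - alpha) + 1) * g a *
        ((\<Sum>i<k. ffact (real i + (1 - alpha)) ((1 - alpha) - 1) * f (a + real i))
         - (\<Sum>i\<in>{1..<k}. ffact (real i + (1 - alpha) - 1) ((1 - alpha) - 1) * f (a + real i)))"
    unfolding e1 e2 e3 e4 mu_def[symmetric] c_def[symmetric] K1 K2 F_def[symmetric]
    by (simp only: k diff_Suc_1)
  finally show ?thesis .
qed

end
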